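(* Consider the networked $SIRS$-$V_o$ system without media actuator described in the context, and assume the opinion graph (with adjacency matrix $A$) is strongly connected. At any healthy state equilibrium (an equilibrium with $x^*=0_n$), the opinions reach consensus at $o_i^*=0$ for all $i\in[n]$.
   Context: There are $n$ nodes. All parameters are real and nonnegative: $a_{ij},\beta_{ij},\gamma_i,\omega_i,\delta_i,\eta^{\min}_{ij},\Delta\eta_{ij}$. $A=[a_{ij}]$ is the weighted adjacency matrix of the directed opinion graph (edge $j\to i$ iff $a_{ij}>0$). Let $B=[\beta_{ij}]$, $H_{\min}=[\eta^{\min}_{ij}]$, $\Delta H=[\Delta\eta_{ij}]$; for a square matrix $M$, $k_i[M]=\sum_jM_{ij}$, $\widetilde K[M]=\mathrm{diag}(k_i[M])$, $L[M]=\widetilde K[M]-M$; $\widetilde G=\mathrm{diag}(\gamma_i)$, $\widetilde W=\mathrm{diag}(\omega_i)$, $\widetilde D=\mathrm{diag}(\delta_i)$, $H(o)=\mathrm{diag}(o)\Delta H+H_{\min}$. State $(o,s,x,r,v)$ with $\widetilde S=\mathrm{diag}(s)$, $\widetilde R=\mathrm{diag}(r)$, dynamics $\dot o=A(x-o)-2L[A]o$, $\dot s=\widetilde Dv-\widetilde S(Bx+H(o)v)+\widetilde Wr$, $\dot x=\widetilde SBx-\widetilde Gx$, $\dot r=\widetilde Gx-\widetilde Wr-\widetilde RH(o)v$, $\dot v=(\widetilde S+\widetilde R)H(o)v-\widetilde Dv$. A healthy state equilibrium is an equilibrium with $x^*=0_n$. *)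

theory Defs
  imports "HOL-Analysis.Analysis"
begin

text \<open>Nodes are indexed by a finite type 'n (so n = CARD('n)).
  Vectors are real^'n, matrices real^'n^'n with M $ i $ j = M_ij.\<close>

definition diagm :: "real^'n \<Rightarrow> real^'n^'n" where
  "diagm d = (\<chi> i j. if i = j then d $ i else 0)"

definition kvec :: "real^'n^'n \<Rightarrow> real^'n" where
  "kvec M = (\<chi> i. \<Sum>j\<in>UNIV. M $ i $ j)"

definition Ktilde :: "real^'n^'n \<Rightarrow> real^'n^'n" where
  "Ktilde M = diagm (kvec M)"

definition lap :: "real^'n^'n \<Rightarrow> real^'n^'n" where
  "lap M = Ktilde M - M"

definition Hmat :: "real^'n^'n \<Rightarrow> real^'n^'n \<Rightarrow> real^'n \<Rightarrow> real^'n^'n" where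
  "Hmat Hmin dH op = diagm op ** dH + Hmin"

text \<open>Directed opinion graph: edge j \<rightarrow> i iff a_ij > 0.  Strong connectivity:
  every node reaches every node by a nonempty directed path.\<close>
definition strongly_connected :: "real^'n^'n \<Rightarrow> bool" where
  "strongly_connected A \<longleftrightarrow>
     (\<forall>i j. (j, i) \<in> {(j', i'). A $ i' $ j' > 0}\<^sup>+)"

definition o_rhs :: "real^'n^'n \<Rightarrow> real^'n \<Rightarrow> real^'n \<Rightarrow> real^'n" where
  "o_rhs A op x = A *v (x - op) - 2 *\<^sub>R (lap A *v op)"

definition s_rhs where
  "s_rhs B Hmin dH w d op s x r v =
     diagm d *v v - diagm s *v (B *v x + Hmat Hmin dH op *v v) + diagm w *v r"

definition x_rhs where
  "x_rhs B g s x = diagm s *v (B *v x) - diagm g *v x"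

definition r_rhs where
  "r_rhs Hmin dH g w op x r v =
     diagm g *v x - diagm w *v r - diagm r *v (Hmat Hmin dH op *v v)"

definition v_rhs where
  "v_rhs Hmin dH d op s r v =
     (diagm s + diagm r) *v (Hmat Hmin dH op *v v) - diagm d *v v"

definition is_equilibrium ::
  "real^'n^'n \<Rightarrow> real^'n^'n \<Rightarrow> real^'n \<Rightarrow> real^'n \<Rightarrow> real^'n \<Rightarrow>
   real^'n^'n \<Rightarrow> real^'n^'n \<Rightarrow>
   real^'n \<Rightarrow> real^'n \<Rightarrow> real^'n \<Rightarrow> real^'n \<Rightarrow> real^'n \<Rightarrow> bool" where
  "is_equilibrium A B g w d Hmin dH op s x r v \<longleftrightarrow>
     o_rhs A op x = 0 \<and>
     s_rhs B Hmin dH w d op s x r v = 0 \<and>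
     x_rhs B g s x = 0 \<and>
     r_rhs Hmin dH g w op x r v = 0 \<and>
     v_rhs Hmin dH d op s r v = 0"

definition healthy_equilibrium where
  "healthy_equilibrium A B g w d Hmin dH op s x r v \<longleftrightarrow>
     is_equilibrium A B g w d Hmin dH op s x r v \<and> x = 0"

end

theory Submission
  imports Defs
begin

lemma diagm_mulv: "(diagm d *v v) $ i = d $ i * v $ i"
proof -
  have eq: "\<And>j. (if i = j then d $ i else 0) * v $ j = (if i = j then d $ i * v $ j else 0)" by simp
  show ?thesis unfolding diagm_def matrix_vector_mult_def
    by (simp only: vec_lambda_beta eq) simp
qed

lemma pos_row:
  assumes "strongly_connected A"
  shows "\<exists>j. A $ i $ j > 0"
proof -
  have "(i, i) \<in> {(j', i'). A $ i' $ j' > 0}\<^sup>+" using assms unfolding strongly_connected_def by blast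
  then show ?thesis by (cases rule: tranclE) auto
qed

theorem lemma4:
  fixes A B Hmin dH :: "real^'n^'n" and g w d op s x r v :: "real^'n"
  assumes "\<forall>i j. A $ i $ j \<ge> 0" and "\<forall>i j. B $ i $ j \<ge> 0"
    and "\<forall>i j. Hmin $ i $ j \<ge> 0" and "\<forall>i j. dH $ i $ j \<ge> 0"
    and "\<forall>i. g $ i \<ge> 0" and "\<forall>i. w $ i \<ge> 0" and "\<forall>i. d $ i \<ge> 0"
    and "strongly_connected A"
    and "healthy_equilibrium A B g w d Hmin dH op s x r v"
  shows "\<forall>i. op $ i = 0"
proof -
  have x0: "x = 0" and oe: "o_rhs A op x = 0"
    using assms(9) unfolding healthy_equilibrium_def is_equilibrium_def by auto
  have comp: "(\<Sum>j\<in>UNIV. A $ i $ j * op $ j) = 2 * (kvec A $ i * op $ i)" for i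
  proof -
    have "(o_rhs A op x) $ i = 0" using oe by simp
    then have "(A *v (0 - op)) $ i - 2 * ((diagm (kvec A) *v op) $ i - (A *v op) $ i) = 0"
      unfolding o_rhs_def x0 lap_def Ktilde_def
      by (simp add: matrix_vector_mult_diff_rdistrib)
    then have "- (A *v op) $ i - 2 * (kvec A $ i * op $ i - (A *v op) $ i) = 0"
      by (simp only: diagm_mulv) (simp add: matrix_vector_mult_def sum_negf)
    then show ?thesis
      by (simp add: matrix_vector_mult_def algebra_simps)
  qed
  define M where "M = Max (range (\<lambda>i. \<bar>op $ i\<bar>))"
  have fin: "finite (range (\<lambda>i. \<bar>op $ i\<bar>))" by simp
  have Mge: "\<bar>op $ j\<bar> \<le> M" for j unfolding M_def using fin by auto
  have "M \<in> range (\<lambda>i. \<bar>op $ i\<bar>)" unfolding M_def using fin by (intro Max_in) auto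
  then obtain i where Mi: "M = \<bar>op $ i\<bar>" by blast
  have kpos: "kvec A $ i > 0"
  proof -
    obtain j where "A $ i $ j > 0" using pos_row[OF assms(8)] by blast
    then have "0 < (\<Sum>j'\<in>UNIV. A $ i $ j')"
      using assms(1) by (intro sum_pos2[where i=j]) auto
    then show ?thesis unfolding kvec_def by simp
  qed
  have "2 * (kvec A $ i * M) = \<bar>\<Sum>j\<in>UNIV. A $ i $ j * op $ j\<bar>"
    using comp[of i] Mi kpos by (simp add: abs_mult)
  also have "\<dots> \<le> (\<Sum>j\<in>UNIV. \<bar>A $ i $ j * op $ j\<bar>)" by (rule sum_abs)
  also have "\<dots> \<le> (\<Sum>j\<in>UNIV. A $ i $ j * M)"
    using assms(1) Mge by (intro sum_mono) (simp add: abs_mult mult_left_mono)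
  also have "\<dots> = kvec A $ i * M" unfolding kvec_def by (simp add: sum_distrib_right)
  finally have "kvec A $ i * M \<le> 0" by (simp add: mult.commute)
  with kpos have "M \<le> 0" by (simp add: mult_le_0_iff)
  then show ?thesis using Mge by (meson abs_le_zero_iff order_trans)
qed

end
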